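(* Let $A^n,A^{n+1}$ be real $N\times N$ matrices satisfying condition (M), let $D=\mathrm{diag}(d_{11},\dots,d_{NN})$ with $d_{ii}>0$ and $\sum_i d_{ii}a^{n+1}_{ij}\ge0$ for all $j$, and let $B^n(\cdot),B^{n+1}(\cdot)$ be limiter-dependent matrices with $\sum_i d_{ii}b^{k}_{ij}(\alpha)=0$ for all $j$, all $\alpha$, $k=n,n+1$. Let $\sigma\in[0,1]$, $\gamma\in(0,1)$, $s_j=d_{jj}+\Delta t\,\sigma\sum_i d_{ii}a^{n+1}_{ij}$, and let $\Delta t>0$ satisfy $$\Delta t\max\left\{(1-\sigma)\|DB^n(\mathbf 1)\|_1,\ \sigma\|DB^{n+1}(\mathbf 1)\|_1\right\}\le\gamma\min_j s_j .$$ Let $y^n,g\in\mathbb R^N$, let $(\alpha^{n,p},\alpha^{n+1,p})\in[0,1]^{N-1}\times[0,1]^{N-1}$ for $p\ge1$ be arbitrary, set $y^{n+1,0}=y^n$ and define $y^{n+1,p}$ for $p\ge1$ by $$\left[E+\Delta t\,\sigma A^{n+1}\right]y^{n+1,p}=\left[E-\Delta t(1-\sigma)\left(A^n-B^n(\alpha^{n,p})\right)\right]y^n+\Delta t\,\sigma B^{n+1}(\alpha^{n+1,p})y^{n+1,p-1}+\Delta t\,g .$$ Put $T_p=\Delta t(1-\sigma)[E+\Delta t\sigma A^{n+1}]^{-1}B^n(\alpha^{n,p})$, $Q_p=\Delta t\,\sigma[E+\Delta t\sigma A^{n+1}]^{-1}B^{n+1}(\alpha^{n+1,p})$, $r=[E+\Delta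 t\sigma A^{n+1}]^{-1}\{[E-\Delta t(1-\sigma)A^n]y^n+\Delta t\,g\}$. Then for every $p\ge1$ $$y^{n+1,p}=\Big[\sum_{i=1}^pQ_pQ_{p-1}\cdots Q_{i+1}T_i+Q_pQ_{p-1}\cdots Q_1\Big]y^n+\Big[E+\sum_{i=2}^pQ_pQ_{p-1}\cdots Q_i\Big]r$$ (empty products being $E$), and $\|T_p\|_1\le\gamma$, $\|Q_p\|_1\le\gamma$ for all $p$; in particular each product of $m$ factors from $\{T_i\}\cup\{Q_i\}$ appearing above has $\|\cdot\|_1$-norm at most $\gamma^m$, so the terms are dominated, uniformly in $p$, by those of a convergent geometric series.
   Context: $E$ is the $N\times N$ identity. Condition (M) on a real $N\times N$ matrix $A=\{a_{ij}\}$: $a_{ii}\ge 0$ for all $i$ and $a_{ij}\le 0$ for all $i\ne j$. Norms: $\|y\|_1=\sum_i|y_i|$, $\|M\|_1=\max_j\sum_i|m_{ij}|$. A limiter-dependent matrix is a map $\alpha=(\alpha_1,\dots,\alpha_{N-1})\in\mathbb R^{N-1}\mapsto B(\alpha)=\{b_{ij}(\alpha)\}$ ($N\times N$) of the form $b_{ij}(\alpha)=\alpha_{\kappa(i,j)}\beta_{ij}$ for $i\ne j$ and $b_{ii}(\alpha)=-\sum_{j\ne i}b_{ij}(\alpha)$, where $\beta_{ij}\le0$ are fixed numbers and $\kappa(i,j)\in\{1,\dots,N-1\}$ are fixed indices. $\mathbf 1$ is the vector with all entries $1$. *)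

theory Defs
  imports "HOL-Analysis.Analysis"
begin

definition condM :: "real^'n^'n \<Rightarrow> bool" where
  "condM A \<longleftrightarrow> (\<forall>i. A$i$i \<ge> 0) \<and> (\<forall>i j. i \<noteq> j \<longrightarrow> A$i$j \<le> 0)"

definition mat_norm1 :: "real^'n^'n \<Rightarrow> real" where
  "mat_norm1 M = Max (range (\<lambda>j. \<Sum>i\<in>UNIV. \<bar>M$i$j\<bar>))"

definition diag_mat :: "real^'n \<Rightarrow> real^'n^'n" where
  "diag_mat d = (\<chi> i j. if i = j then d$i else 0)"

text \<open>Limiter-dependent matrix: limiter vector alpha is indexed by 1..N-1
  (entries outside this range are never used when kappa maps into 1..N-1).\<close>
definition limiter_matrix ::
  "real^'n^'n \<Rightarrow> ('n \<Rightarrow> 'n \<Rightarrow> nat) \<Rightarrow> (nat \<Rightarrow> real) \<Rightarrow> real^'n^'n" where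
  "limiter_matrix \<beta> \<kappa> \<alpha> =
     (\<chi> i j. if i = j then - (\<Sum>k\<in>UNIV - {i}. \<alpha> (\<kappa> i k) * \<beta>$i$k)
             else \<alpha> (\<kappa> i j) * \<beta>$i$j)"

definition limiter_data :: "real^'n^'n \<Rightarrow> ('n \<Rightarrow> 'n \<Rightarrow> nat) \<Rightarrow> bool" where
  "limiter_data \<beta> \<kappa> \<longleftrightarrow>
     (\<forall>i j. i \<noteq> j \<longrightarrow> \<beta>$i$j \<le> 0 \<and> \<kappa> i j \<in> {1..CARD('n) - 1})"

text \<open>Ordered product: lprod Q i p = Q p ** Q (p-1) ** ... ** Q i, identity if i > p.\<close>
fun lprod :: "(nat \<Rightarrow> real^'n^'n) \<Rightarrow> nat \<Rightarrow> nat \<Rightarrow> real^'n^'n" where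
  "lprod Q i 0 = (if i = 0 then Q 0 else mat 1)"
| "lprod Q i (Suc p) = (if i \<le> Suc p then Q (Suc p) ** lprod Q i p else mat 1)"

end

theory Submission
  imports Defs
begin

lemma minv: fixes A :: "real^'n^'n" assumes "invertible A"
  shows "A ** matrix_inv A = mat 1 \<and> matrix_inv A ** A = mat 1"
  using assms unfolding invertible_def matrix_inv_def by (rule someI_ex)

lemma coldom:
  fixes K :: "real^'n^'n"
  assumes "\<forall>j. c \<le> 2 * \<bar>K$j$j\<bar> - (\<Sum>i\<in>UNIV. \<bar>K$i$j\<bar>)"
  shows "c * (\<Sum>j\<in>UNIV. \<bar>x$j\<bar>) \<le> (\<Sum>i\<in>UNIV. \<bar>(K *v x)$i\<bar>)"
proof -
  have pt: "2 * \<bar>K$i$i * x$i\<bar> - (\<Sum>j\<in>UNIV. \<bar>K$i$j * x$j\<bar>) \<le> \<bar>(K *v x)$i\<bar>" for i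
  proof -
    have e1: "(K *v x)$i = K$i$i * x$i + (\<Sum>j\<in>UNIV-{i}. K$i$j * x$j)"
      by (simp add: matrix_vector_mult_def sum.remove)
    have e2: "(\<Sum>j\<in>UNIV. \<bar>K$i$j * x$j\<bar>) = \<bar>K$i$i * x$i\<bar> + (\<Sum>j\<in>UNIV-{i}. \<bar>K$i$j * x$j\<bar>)"
      by (simp add: sum.remove)
    have "\<bar>\<Sum>j\<in>UNIV-{i}. K$i$j * x$j\<bar> \<le> (\<Sum>j\<in>UNIV-{i}. \<bar>K$i$j * x$j\<bar>)"
      by (rule sum_abs)
    then show ?thesis using e1 e2 by linarith
  qed
  have "c * (\<Sum>j\<in>UNIV. \<bar>x$j\<bar>) = (\<Sum>j\<in>UNIV. c * \<bar>x$j\<bar>)" by (simp add: sum_distrib_left)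
  also have "\<dots> \<le> (\<Sum>j\<in>UNIV. (2 * \<bar>K$j$j\<bar> - (\<Sum>i\<in>UNIV. \<bar>K$i$j\<bar>)) * \<bar>x$j\<bar>)"
    by (rule sum_mono, rule mult_right_mono, use assms in auto)
  also have "\<dots> = (\<Sum>i\<in>UNIV. 2 * \<bar>K$i$i * x$i\<bar>) - (\<Sum>j\<in>UNIV. \<Sum>i\<in>UNIV. \<bar>K$i$j * x$j\<bar>)"
    by (simp add: left_diff_distrib sum_subtractf sum_distrib_right abs_mult mult.assoc)
  also have "(\<Sum>j\<in>UNIV. \<Sum>i\<in>UNIV. \<bar>K$i$j * x$j\<bar>) = (\<Sum>i\<in>UNIV. \<Sum>j\<in>UNIV. \<bar>K$i$j * x$j\<bar>)"
    by (rule sum.swap)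
  also have "(\<Sum>i\<in>UNIV. 2 * \<bar>K$i$i * x$i\<bar>) - (\<Sum>i\<in>UNIV. \<Sum>j\<in>UNIV. \<bar>K$i$j * x$j\<bar>) = (\<Sum>i\<in>UNIV. 2 * \<bar>K$i$i * x$i\<bar> - (\<Sum>j\<in>UNIV. \<bar>K$i$j * x$j\<bar>))"
    by (simp add: sum_subtractf)
  also have "\<dots> \<le> (\<Sum>i\<in>UNIV. \<bar>(K *v x)$i\<bar>)"
    by (rule sum_mono, rule pt)
  finally show ?thesis .
qed



lemma norm1_le:
  fixes X :: "real^'n^'n"
  assumes "\<And>j. (\<Sum>i\<in>UNIV. \<bar>X$i$j\<bar>) \<le> b"
  shows "mat_norm1 X \<le> b"
  unfolding mat_norm1_def using assms by (subst Max_le_iff) auto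

lemma norm1_ge:
  fixes X :: "real^'n^'n"
  shows "(\<Sum>i\<in>UNIV. \<bar>X$i$j\<bar>) \<le> mat_norm1 X"
  unfolding mat_norm1_def by (rule Max_ge) auto

lemma norm1_nonneg: "0 \<le> mat_norm1 (X :: real^'n^'n)"
  by (rule order_trans[OF _ norm1_ge]) (simp add: sum_nonneg)

lemma norm1_submult:
  fixes A B :: "real^'n^'n"
  shows "mat_norm1 (A ** B) \<le> mat_norm1 A * mat_norm1 B"
proof (rule norm1_le)
  fix j
  have "(\<Sum>i\<in>UNIV. \<bar>(A ** B)$i$j\<bar>) \<le> (\<Sum>i\<in>UNIV. \<Sum>k\<in>UNIV. \<bar>A$i$k\<bar> * \<bar>B$k$j\<bar>)"
    unfolding matrix_matrix_mult_def by (auto intro!: sum_mono order_trans[OF sum_abs] simp: abs_mult)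
  also have "\<dots> = (\<Sum>k\<in>UNIV. \<Sum>i\<in>UNIV. \<bar>A$i$k\<bar> * \<bar>B$k$j\<bar>)"
    by (rule sum.swap)
  also have "\<dots> = (\<Sum>k\<in>UNIV. (\<Sum>i\<in>UNIV. \<bar>A$i$k\<bar>) * \<bar>B$k$j\<bar>)"
    by (simp add: sum_distrib_right)
  also have "\<dots> \<le> (\<Sum>k\<in>UNIV. mat_norm1 A * \<bar>B$k$j\<bar>)"
    by (rule sum_mono, rule mult_right_mono, rule norm1_ge, simp)
  also have "\<dots> = mat_norm1 A * (\<Sum>k\<in>UNIV. \<bar>B$k$j\<bar>)"
    by (simp add: sum_distrib_left)
  also have "\<dots> \<le> mat_norm1 A * mat_norm1 B"
    by (rule mult_left_mono, rule norm1_ge, rule norm1_nonneg)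
  finally show "(\<Sum>i\<in>UNIV. \<bar>(A ** B)$i$j\<bar>) \<le> mat_norm1 A * mat_norm1 B" .
qed

lemma norm1_id: "mat_norm1 (mat 1 :: real^'n^'n) = 1"
proof -
  have "(\<Sum>i\<in>UNIV. \<bar>(mat 1 :: real^'n^'n)$i$j\<bar>) = 1" for j
    by (simp add: mat_def if_distrib cong: if_cong)
  then show ?thesis unfolding mat_norm1_def by simp
qed

lemma diag_mult: "diag_mat d ** B = (\<chi> i j. d$i * B$i$j)"
proof -
  have "(\<Sum>k\<in>UNIV. (if i = k then d$i else 0) * B$k$j) = d$i * B$i$j" for i j
  proof -
    have "(\<Sum>k\<in>UNIV. (if i = k then d$i else 0) * B$k$j) = (\<Sum>k\<in>UNIV. if i = k then d$i * B$i$j else 0)"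
      by (rule sum.cong) auto
    then show ?thesis by simp
  qed
  then show ?thesis by (simp add: vec_eq_iff matrix_matrix_mult_def diag_mat_def)
qed

lemma lprod_gt: "1 \<le> i \<Longrightarrow> p < i \<Longrightarrow> lprod Q i p = mat 1"
  by (cases p) auto

lemma lprod_norm:
  assumes Qn: "\<And>k. 1 \<le> k \<Longrightarrow> mat_norm1 (Q k) \<le> \<gamma>" and g: "0 \<le> \<gamma>" and i: "1 \<le> i"
  shows "mat_norm1 (lprod Q i p) \<le> \<gamma> ^ (Suc p - i)"
proof (induction p)
  case 0
  then show ?case using i by (simp add: norm1_id)
next
  case (Suc p)
  show ?case
  proof (cases "i \<le> Suc p")
    case True
    have "mat_norm1 (lprod Q i (Suc p)) \<le> mat_norm1 (Q (Suc p)) * mat_norm1 (lprod Q i p)"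
      using True by (simp add: norm1_submult)
    also have "\<dots> \<le> \<gamma> * \<gamma> ^ (Suc p - i)"
      by (rule mult_mono[OF Qn Suc.IH g norm1_nonneg]) simp
    also have "\<dots> = \<gamma> ^ (Suc (Suc p) - i)" using True
      by (simp add: Suc_diff_le)
    finally show ?thesis .
  next
    case False
    then show ?thesis by (simp add: norm1_id)
  qed
qed

lemma mat_mul_sum: "(A :: real^'n^'n) ** sum f S = (\<Sum>i\<in>S. A ** f i)"
  by (induction S rule: infinite_finite_induct) (auto simp: matrix_add_ldistrib)

lemma lim_bound:
  fixes \<beta> :: "real^'n^'n" and d :: "real^'n"
  assumes dpos: "\<forall>i. d$i > 0" and bneg: "\<forall>i j. i \<noteq> j \<longrightarrow> \<beta>$i$j \<le> 0"
    and al: "\<forall>i j. i \<noteq> j \<longrightarrow> 0 \<le> \<alpha> (\<kappa> i j) \<and> \<alpha> (\<kappa> i j) \<le> 1"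
    and ca: "(\<Sum>i\<in>UNIV. d$i * limiter_matrix \<beta> \<kappa> \<alpha> $i$j) = 0"
    and c1: "(\<Sum>i\<in>UNIV. d$i * limiter_matrix \<beta> \<kappa> (\<lambda>_. 1) $i$j) = 0"
  shows "(\<Sum>i\<in>UNIV. \<bar>d$i * limiter_matrix \<beta> \<kappa> \<alpha> $i$j\<bar>)
         \<le> (\<Sum>i\<in>UNIV. \<bar>d$i * limiter_matrix \<beta> \<kappa> (\<lambda>_. 1) $i$j\<bar>)"
proof -
  define f where "f i = d$i * limiter_matrix \<beta> \<kappa> \<alpha> $i$j" for i
  define g where "g i = d$i * limiter_matrix \<beta> \<kappa> (\<lambda>_. 1) $i$j" for i
  have fo: "i \<noteq> j \<Longrightarrow> f i = d$i * (\<alpha> (\<kappa> i j) * \<beta>$i$j)" for i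
    by (simp add: f_def limiter_matrix_def)
  have go: "i \<noteq> j \<Longrightarrow> g i = d$i * \<beta>$i$j" for i
    by (simp add: g_def limiter_matrix_def)
  have fneg: "i \<noteq> j \<Longrightarrow> f i \<le> 0" for i
    using fo[of i] dpos bneg al
    by (simp add: mult_nonneg_nonpos mult_nonneg_nonpos2 less_imp_le)
  have gneg: "i \<noteq> j \<Longrightarrow> g i \<le> 0" for i
    using go[of i] dpos bneg by (simp add: mult_nonneg_nonpos less_imp_le)
  have fg: "i \<noteq> j \<Longrightarrow> g i \<le> f i" for i
  proof -
    assume ij: "i \<noteq> j"
    have "\<beta>$i$j \<le> \<alpha> (\<kappa> i j) * \<beta>$i$j"
      using mult_right_mono_neg[of "\<alpha> (\<kappa> i j)" 1 "\<beta>$i$j"] al bneg ij by simp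
    then show ?thesis using fo[OF ij] go[OF ij] dpos
      by (simp add: mult_left_mono less_imp_le)
  qed
  have "(\<Sum>i\<in>UNIV. f i) = f j + (\<Sum>i\<in>UNIV-{j}. f i)" by (simp add: sum.remove)
  moreover have "(\<Sum>i\<in>UNIV-{j}. f i) \<le> 0" by (rule sum_nonpos) (use fneg in auto)
  ultimately have fj: "f j \<ge> 0" using ca unfolding f_def by linarith
  have "(\<Sum>i\<in>UNIV. \<bar>f i\<bar>) = (\<Sum>i\<in>UNIV. \<bar>f i\<bar> - f i)"
    using ca by (simp add: sum_subtractf f_def)
  also have "\<dots> = (\<Sum>i\<in>UNIV. if i = j then 0 else - 2 * f i)"
    by (rule sum.cong) (use fj fneg in auto)
  also have "\<dots> \<le> (\<Sum>i\<in>UNIV. if i = j then 0 else - 2 * g i)"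
    by (rule sum_mono) (use fg in auto)
  also have "\<dots> \<le> (\<Sum>i\<in>UNIV. \<bar>g i\<bar> - g i)"
    by (rule sum_mono) (use gneg in auto)
  also have "\<dots> = (\<Sum>i\<in>UNIV. \<bar>g i\<bar>)"
    using c1 by (simp add: sum_subtractf g_def)
  finally show ?thesis unfolding f_def g_def .
qed


lemma col_bound_gen:
  fixes Mi L :: "real^'n^'n" and d :: "real^'n"
  assumes key: "\<And>u. c * (\<Sum>i\<in>UNIV. \<bar>(Mi *v u)$i\<bar>) \<le> (\<Sum>i\<in>UNIV. \<bar>d$i * u$i\<bar>)"
    and cpos: "0 < c" and t: "0 \<le> t"
    and Lb: "\<And>j. (\<Sum>i\<in>UNIV. \<bar>d$i * L$i$j\<bar>) \<le> N"
    and tN: "t * N \<le> \<gamma> * c"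
  shows "mat_norm1 (t *\<^sub>R (Mi ** L)) \<le> \<gamma>"
proof (rule norm1_le)
  fix j
  define col where "col = (\<chi> k. L$k$j)"
  have e: "(Mi ** L)$i$j = (Mi *v col)$i" for i
    by (simp add: matrix_matrix_mult_def matrix_vector_mult_def col_def)
  have s1: "(\<Sum>i\<in>UNIV. \<bar>(t *\<^sub>R (Mi ** L))$i$j\<bar>) = t * (\<Sum>i\<in>UNIV. \<bar>(Mi *v col)$i\<bar>)"
    using t by (simp add: e abs_mult sum_distrib_left)
  have "c * (t * (\<Sum>i\<in>UNIV. \<bar>(Mi *v col)$i\<bar>)) = t * (c * (\<Sum>i\<in>UNIV. \<bar>(Mi *v col)$i\<bar>))"
    by (simp add: algebra_simps)
  also have "\<dots> \<le> t * (\<Sum>i\<in>UNIV. \<bar>d$i * col$i\<bar>)"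
    by (rule mult_left_mono[OF key t])
  also have "\<dots> \<le> t * N"
    by (rule mult_left_mono[OF _ t]) (use Lb[of j] in \<open>simp add: col_def\<close>)
  also have "\<dots> \<le> c * \<gamma>" using tN by (simp add: mult.commute)
  finally have "t * (\<Sum>i\<in>UNIV. \<bar>(Mi *v col)$i\<bar>) \<le> \<gamma>"
    using cpos by (simp add: mult_le_cancel_left_pos)
  then show "(\<Sum>i\<in>UNIV. \<bar>(t *\<^sub>R (Mi ** L))$i$j\<bar>) \<le> \<gamma>" using s1 by simp
qed

theorem theorem7:
  fixes A0 A1 :: "real^'n^'n"
    and d :: "real^'n"
    and \<beta>0 \<beta>1 :: "real^'n^'n"
    and \<kappa>0 \<kappa>1 :: "'n \<Rightarrow> 'n \<Rightarrow> nat"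
    and \<sigma> \<gamma> \<Delta>t :: real
    and yn g :: "real^'n"
    and \<alpha>0 \<alpha>1 :: "nat \<Rightarrow> nat \<Rightarrow> real"
    and y :: "nat \<Rightarrow> real^'n"
  defines "D \<equiv> diag_mat d"
    and "B0 \<equiv> limiter_matrix \<beta>0 \<kappa>0"
    and "B1 \<equiv> limiter_matrix \<beta>1 \<kappa>1"
    and "s \<equiv> (\<lambda>j. d$j + \<Delta>t * \<sigma> * (\<Sum>i\<in>UNIV. d$i * A1$i$j))"
    and "M \<equiv> mat 1 + (\<Delta>t * \<sigma>) *\<^sub>R A1"
    and "T \<equiv> (\<lambda>p. (\<Delta>t * (1 - \<sigma>)) *\<^sub>R (matrix_inv (mat 1 + (\<Delta>t * \<sigma>) *\<^sub>R A1) ** limiter_matrix \<beta>0 \<kappa>0 (\<alpha>0 p)))"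
    and "Q \<equiv> (\<lambda>p. (\<Delta>t * \<sigma>) *\<^sub>R (matrix_inv (mat 1 + (\<Delta>t * \<sigma>) *\<^sub>R A1) ** limiter_matrix \<beta>1 \<kappa>1 (\<alpha>1 p)))"
    and "r \<equiv> matrix_inv (mat 1 + (\<Delta>t * \<sigma>) *\<^sub>R A1) *v ((mat 1 - (\<Delta>t * (1 - \<sigma>)) *\<^sub>R A0) *v yn + \<Delta>t *\<^sub>R g)"
  assumes M0: "condM A0" and M1: "condM A1"
    and dpos: "\<forall>i. d$i > 0"
    and colA1: "\<forall>j. (\<Sum>i\<in>UNIV. d$i * A1$i$j) \<ge> 0"
    and lim0: "limiter_data \<beta>0 \<kappa>0" and lim1: "limiter_data \<beta>1 \<kappa>1"
    and colB0: "\<forall>\<alpha> j. (\<Sum>i\<in>UNIV. d$i * B0 \<alpha> $i$j) = 0"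
    and colB1: "\<forall>\<alpha> j. (\<Sum>i\<in>UNIV. d$i * B1 \<alpha> $i$j) = 0"
    and sig: "0 \<le> \<sigma>" "\<sigma> \<le> 1"
    and gam: "0 < \<gamma>" "\<gamma> < 1"
    and dt: "\<Delta>t > 0"
    and cfl: "\<Delta>t * max ((1 - \<sigma>) * mat_norm1 (D ** B0 (\<lambda>_. 1)))
                         (\<sigma> * mat_norm1 (D ** B1 (\<lambda>_. 1)))
              \<le> \<gamma> * Min (range s)"
    and alpha0: "\<forall>p k. p \<ge> 1 \<longrightarrow> k \<in> {1..CARD('n) - 1} \<longrightarrow> 0 \<le> \<alpha>0 p k \<and> \<alpha>0 p k \<le> 1"
    and alpha1: "\<forall>p k. p \<ge> 1 \<longrightarrow> k \<in> {1..CARD('n) - 1} \<longrightarrow> 0 \<le> \<alpha>1 p k \<and> \<alpha>1 p k \<le> 1"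
    and y0: "y 0 = yn"
    and ystep: "\<forall>p. p \<ge> 1 \<longrightarrow>
       M *v y p = (mat 1 - (\<Delta>t * (1 - \<sigma>)) *\<^sub>R (A0 - limiter_matrix \<beta>0 \<kappa>0 (\<alpha>0 p))) *v yn
                  + (\<Delta>t * \<sigma>) *\<^sub>R (limiter_matrix \<beta>1 \<kappa>1 (\<alpha>1 p) *v y (p - 1)) + \<Delta>t *\<^sub>R g"
  shows "invertible M
    \<and> (\<forall>p. p \<ge> 1 \<longrightarrow>
         y p = ((\<Sum>i\<in>{1..p}. lprod Q (i + 1) p ** T i) + lprod Q 1 p) *v yn
               + (mat 1 + (\<Sum>i\<in>{2..p}. lprod Q i p)) *v r)
    \<and> (\<forall>p. p \<ge> 1 \<longrightarrow> mat_norm1 (T p) \<le> \<gamma> \<and> mat_norm1 (Q p) \<le> \<gamma>)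
    \<and> (\<forall>p i. 1 \<le> i \<and> i \<le> p \<longrightarrow>
         mat_norm1 (lprod Q (i + 1) p ** T i) \<le> \<gamma> ^ (p - i + 1)
         \<and> mat_norm1 (lprod Q i p) \<le> \<gamma> ^ (p - i + 1))"
proof -
  define t0 where "t0 = \<Delta>t * (1 - \<sigma>)"
  define t1 where "t1 = \<Delta>t * \<sigma>"
  define Mi where "Mi = matrix_inv M"
  define L0 where "L0 = limiter_matrix \<beta>0 \<kappa>0"
  define L1 where "L1 = limiter_matrix \<beta>1 \<kappa>1"
  have t0: "0 \<le> t0" using sig dt by (simp add: t0_def)
  have t1: "0 \<le> t1" using sig dt by (simp add: t1_def)
  have Tdef: "T = (\<lambda>p. t0 *\<^sub>R (Mi ** L0 (\<alpha>0 p)))"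
    by (simp add: T_def t0_def Mi_def M_def L0_def)
  have Qdef: "Q = (\<lambda>p. t1 *\<^sub>R (Mi ** L1 (\<alpha>1 p)))"
    by (simp add: Q_def t1_def Mi_def M_def L1_def)
  have rdef: "r = Mi *v ((mat 1 - t0 *\<^sub>R A0) *v yn + \<Delta>t *\<^sub>R g)"
    by (simp add: r_def t0_def Mi_def M_def)
  define c where "c = Min (range s)"
  have cle: "c \<le> s j" for j by (simp add: c_def)
  have spos: "d$j \<le> s j" for j
    using colA1 t1 by (simp add: s_def t1_def[symmetric])
  have cpos: "0 < c"
  proof -
    have "c \<in> range s" unfolding c_def by (rule Min_in) auto
    then obtain j where "c = s j" by auto
    then show ?thesis using spos[of j] dpos by (metis less_le_trans)
  qed
  define K where "K = (\<chi> i j. d$i * M$i$j)"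
  have Kv: "(K *v x)$i = d$i * (M *v x)$i" for x i
    by (simp add: K_def matrix_vector_mult_def sum_distrib_left mult.assoc)
  have Mij: "M$i$j = (if i = j then 1 else 0) + t1 * A1$i$j" for i j
    by (simp add: M_def t1_def mat_def)
  have Kdom: "\<forall>j. c \<le> 2 * \<bar>K$j$j\<bar> - (\<Sum>i\<in>UNIV. \<bar>K$i$j\<bar>)"
  proof
    fix j
    have kj: "K$i$j = d$i * ((if i = j then 1 else 0) + t1 * A1$i$j)" for i
      by (simp add: K_def Mij)
    have koff: "i \<noteq> j \<Longrightarrow> K$i$j \<le> 0" for i
      using M1 dpos t1 unfolding condM_def kj
      by (simp add: mult_nonneg_nonpos less_imp_le)
    have kon: "0 \<le> K$j$j"
      using M1 dpos t1 unfolding condM_def kj by (simp add: less_imp_le)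
    have pw: "\<bar>K$i$j\<bar> + K$i$j = (if i = j then 2 * K$j$j else 0)" for i
      using koff[of i] kon by auto
    have "(\<Sum>i\<in>UNIV. \<bar>K$i$j\<bar>) + (\<Sum>i\<in>UNIV. K$i$j) = 2 * K$j$j"
      by (simp add: sum.distrib[symmetric] pw)
    moreover have "(\<Sum>i\<in>UNIV. K$i$j) = s j"
    proof -
      have "(\<Sum>i\<in>UNIV. K$i$j) = (\<Sum>i\<in>UNIV. (if i = j then d$i else 0) + t1 * (d$i * A1$i$j))"
        by (rule sum.cong) (auto simp: kj algebra_simps)
      also have "\<dots> = d$j + t1 * (\<Sum>i\<in>UNIV. d$i * A1$i$j)"
        by (simp add: sum.distrib sum_distrib_left)
      finally show ?thesis by (simp add: s_def t1_def)
    qed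
    ultimately show "c \<le> 2 * \<bar>K$j$j\<bar> - (\<Sum>i\<in>UNIV. \<bar>K$i$j\<bar>)"
      using kon cle[of j] by simp
  qed
  have inj: "x = 0" if "M *v x = 0" for x
  proof -
    have "c * (\<Sum>j\<in>UNIV. \<bar>x$j\<bar>) \<le> (\<Sum>i\<in>UNIV. \<bar>(K *v x)$i\<bar>)"
      by (rule coldom[OF Kdom])
    also have "\<dots> = 0" by (simp add: Kv that)
    finally have "(\<Sum>j\<in>UNIV. \<bar>x$j\<bar>) \<le> 0"
      using cpos by (simp add: mult_le_0_iff)
    then have "(\<Sum>j\<in>UNIV. \<bar>x$j\<bar>) = 0" by (simp add: antisym sum_nonneg)
    then have "\<forall>j\<in>UNIV. \<bar>x$j\<bar> = 0" by (subst (asm) sum_nonneg_eq_0_iff) auto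
    then show ?thesis by (simp add: vec_eq_iff)
  qed
  obtain B where "B ** M = mat 1"
    using matrix_left_invertible_ker[of M] inj by blast
  then have invM: "invertible M"
    unfolding invertible_def using matrix_left_right_inverse by blast
  have MM: "M ** Mi = mat 1" "Mi ** M = mat 1"
    using minv[OF invM] by (simp_all add: Mi_def)
  have key: "c * (\<Sum>i\<in>UNIV. \<bar>(Mi *v u)$i\<bar>) \<le> (\<Sum>i\<in>UNIV. \<bar>d$i * u$i\<bar>)" for u
  proof -
    have "M *v (Mi *v u) = u" by (simp add: matrix_vector_mul_assoc MM)
    then show ?thesis using coldom[OF Kdom, of "Mi *v u"] by (simp add: Kv)
  qed
  have Tn: "mat_norm1 (T p) \<le> \<gamma>" if p: "p \<ge> 1" for p
    unfolding Tdef
  proof (rule col_bound_gen[OF key cpos t0])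
    fix j
    have "(\<Sum>i\<in>UNIV. \<bar>d$i * L0 (\<alpha>0 p)$i$j\<bar>) \<le> (\<Sum>i\<in>UNIV. \<bar>d$i * L0 (\<lambda>_. 1)$i$j\<bar>)"
      unfolding L0_def
    proof (rule lim_bound[OF dpos])
      show "\<forall>i j. i \<noteq> j \<longrightarrow> \<beta>0$i$j \<le> 0" using lim0 by (simp add: limiter_data_def)
      show "\<forall>i j. i \<noteq> j \<longrightarrow> 0 \<le> \<alpha>0 p (\<kappa>0 i j) \<and> \<alpha>0 p (\<kappa>0 i j) \<le> 1"
        using lim0 alpha0 p by (simp add: limiter_data_def)
      show "(\<Sum>i\<in>UNIV. d$i * limiter_matrix \<beta>0 \<kappa>0 (\<alpha>0 p) $i$j) = 0"
        using colB0 by (simp add: B0_def)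
      show "(\<Sum>i\<in>UNIV. d$i * limiter_matrix \<beta>0 \<kappa>0 (\<lambda>_. 1) $i$j) = 0"
        using colB0 by (simp add: B0_def)
    qed
    also have "\<dots> \<le> mat_norm1 (D ** B0 (\<lambda>_. 1))"
      using norm1_ge[of "D ** B0 (\<lambda>_. 1)" j] by (simp add: D_def diag_mult B0_def L0_def)
    finally show "(\<Sum>i\<in>UNIV. \<bar>d$i * L0 (\<alpha>0 p)$i$j\<bar>) \<le> mat_norm1 (D ** B0 (\<lambda>_. 1))" .
  next
    have "t0 * mat_norm1 (D ** B0 (\<lambda>_. 1)) \<le> \<Delta>t * max ((1 - \<sigma>) * mat_norm1 (D ** B0 (\<lambda>_. 1)))
                         (\<sigma> * mat_norm1 (D ** B1 (\<lambda>_. 1)))"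
      unfolding t0_def using dt by (simp add: mult.assoc mult_left_mono)
    then show "t0 * mat_norm1 (D ** B0 (\<lambda>_. 1)) \<le> \<gamma> * c" using cfl by (simp add: c_def)
  qed
  have Qn: "mat_norm1 (Q p) \<le> \<gamma>" if p: "p \<ge> 1" for p
    unfolding Qdef
  proof (rule col_bound_gen[OF key cpos t1])
    fix j
    have "(\<Sum>i\<in>UNIV. \<bar>d$i * L1 (\<alpha>1 p)$i$j\<bar>) \<le> (\<Sum>i\<in>UNIV. \<bar>d$i * L1 (\<lambda>_. 1)$i$j\<bar>)"
      unfolding L1_def
    proof (rule lim_bound[OF dpos])
      show "\<forall>i j. i \<noteq> j \<longrightarrow> \<beta>1$i$j \<le> 0" using lim1 by (simp add: limiter_data_def)
      show "\<forall>i j. i \<noteq> j \<longrightarrow> 0 \<le> \<alpha>1 p (\<kappa>1 i j) \<and> \<alpha>1 p (\<kappa>1 i j) \<le> 1"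
        using lim1 alpha1 p by (simp add: limiter_data_def)
      show "(\<Sum>i\<in>UNIV. d$i * limiter_matrix \<beta>1 \<kappa>1 (\<alpha>1 p) $i$j) = 0"
        using colB1 by (simp add: B1_def)
      show "(\<Sum>i\<in>UNIV. d$i * limiter_matrix \<beta>1 \<kappa>1 (\<lambda>_. 1) $i$j) = 0"
        using colB1 by (simp add: B1_def)
    qed
    also have "\<dots> \<le> mat_norm1 (D ** B1 (\<lambda>_. 1))"
      using norm1_ge[of "D ** B1 (\<lambda>_. 1)" j] by (simp add: D_def diag_mult B1_def L1_def)
    finally show "(\<Sum>i\<in>UNIV. \<bar>d$i * L1 (\<alpha>1 p)$i$j\<bar>) \<le> mat_norm1 (D ** B1 (\<lambda>_. 1))" .
  next
    have "t1 * mat_norm1 (D ** B1 (\<lambda>_. 1)) \<le> \<Delta>t * max ((1 - \<sigma>) * mat_norm1 (D ** B0 (\<lambda>_. 1)))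
                         (\<sigma> * mat_norm1 (D ** B1 (\<lambda>_. 1)))"
      unfolding t1_def using dt by (simp add: mult.assoc mult_left_mono)
    then show "t1 * mat_norm1 (D ** B1 (\<lambda>_. 1)) \<le> \<gamma> * c" using cfl by (simp add: c_def)
  qed
  have rec: "y p = r + T p *v yn + Q p *v y (p - 1)" if p: "p \<ge> 1" for p
  proof -
    have "y p = Mi *v (M *v y p)" using MM by (simp add: matrix_vector_mul_assoc)
    also have "M *v y p = ((mat 1 - t0 *\<^sub>R A0) *v yn + \<Delta>t *\<^sub>R g) + t0 *\<^sub>R (L0 (\<alpha>0 p) *v yn)
                  + t1 *\<^sub>R (L1 (\<alpha>1 p) *v y (p - 1))"
      using ystep p by (simp add: t0_def t1_def L0_def L1_def algebra_simps scaleR_matrix_vector_assoc[symmetric])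
    finally show ?thesis
      by (simp add: Tdef Qdef rdef matrix_vector_right_distrib scaleR_matrix_vector_assoc[symmetric]
          matrix_vector_mult_scaleR matrix_vector_mul_assoc[symmetric])
  qed
  define S where "S p = (\<Sum>i\<in>{1..p}. lprod Q (i + 1) p ** T i) + lprod Q 1 p" for p
  define R where "R p = (\<Sum>i\<in>{2..p}. lprod Q i p)" for p
  have Sstep: "S (Suc p) = Q (Suc p) ** S p + T (Suc p)" for p
  proof -
    have a: "(\<Sum>i\<in>{1..p}. lprod Q (i + 1) (Suc p) ** T i) = Q (Suc p) ** (\<Sum>i\<in>{1..p}. lprod Q (i + 1) p ** T i)"
      by (simp add: mat_mul_sum matrix_mul_assoc)
    have b: "lprod Q (Suc p + 1) (Suc p) = mat 1" by (rule lprod_gt) auto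
    show ?thesis unfolding S_def using a b
      by (simp add: matrix_add_ldistrib)
  qed
  have Rstep: "R (Suc p) = Q (Suc p) ** (mat 1 + R p)" if p: "p \<ge> 1" for p
  proof -
    have a: "(\<Sum>i\<in>{2..p}. lprod Q i (Suc p)) = Q (Suc p) ** R p"
      unfolding R_def mat_mul_sum by (rule sum.cong) auto
    have b: "lprod Q (Suc p) p = mat 1" by (rule lprod_gt) auto
    have "R (Suc p) = (\<Sum>i\<in>{2..p}. lprod Q i (Suc p)) + lprod Q (Suc p) (Suc p)"
      unfolding R_def using p by simp
    also have "\<dots> = Q (Suc p) ** R p + Q (Suc p)" using a b by simp
    finally show ?thesis by (simp add: matrix_add_ldistrib add.commute)
  qed
  have form: "y (Suc q) = S (Suc q) *v yn + (mat 1 + R (Suc q)) *v r" for q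
  proof (induction q)
    case 0
    have "y (Suc 0) = r + T (Suc 0) *v yn + Q (Suc 0) *v yn" using rec[of "Suc 0"] y0 by simp
    moreover have "S (Suc 0) = T (Suc 0) + Q (Suc 0)" by (simp add: S_def lprod_gt)
    moreover have "R (Suc 0) = 0" by (simp add: R_def)
    ultimately show ?case by (simp add: matrix_vector_mult_add_rdistrib add_ac)
  next
    case (Suc q)
    have "y (Suc (Suc q)) = r + T (Suc (Suc q)) *v yn + Q (Suc (Suc q)) *v y (Suc q)"
      using rec[of "Suc (Suc q)"] by simp
    then show ?case using Suc.IH
      by (simp add: Sstep Rstep matrix_vector_mult_add_rdistrib matrix_vector_right_distrib
          matrix_vector_mul_assoc[symmetric] add_ac)
  qed
  have part2: "\<forall>p. p \<ge> 1 \<longrightarrow>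
         y p = ((\<Sum>i\<in>{1..p}. lprod Q (i + 1) p ** T i) + lprod Q 1 p) *v yn
               + (mat 1 + (\<Sum>i\<in>{2..p}. lprod Q i p)) *v r"
  proof (intro allI impI)
    fix p :: nat assume "p \<ge> 1"
    then obtain q where "p = Suc q" by (cases p) auto
    then show "y p = ((\<Sum>i\<in>{1..p}. lprod Q (i + 1) p ** T i) + lprod Q 1 p) *v yn
               + (mat 1 + (\<Sum>i\<in>{2..p}. lprod Q i p)) *v r"
      using form[of q] by (simp add: S_def R_def)
  qed
  have g0: "0 \<le> \<gamma>" using gam by simp
  have part4: "\<forall>p i. 1 \<le> i \<and> i \<le> p \<longrightarrow>
         mat_norm1 (lprod Q (i + 1) p ** T i) \<le> \<gamma> ^ (p - i + 1)
         \<and> mat_norm1 (lprod Q i p) \<le> \<gamma> ^ (p - i + 1)"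
  proof (intro allI impI conjI)
    fix p i :: nat assume pi: "1 \<le> i \<and> i \<le> p"
    have "mat_norm1 (lprod Q (i + 1) p ** T i) \<le> mat_norm1 (lprod Q (i + 1) p) * mat_norm1 (T i)"
      by (rule norm1_submult)
    also have "\<dots> \<le> \<gamma> ^ (Suc p - (i + 1)) * \<gamma>"
      by (rule mult_mono[OF lprod_norm[OF Qn g0] Tn _ norm1_nonneg]) (use pi g0 in \<open>auto simp: zero_le_power\<close>)
    also have "\<dots> = \<gamma> ^ (p - i + 1)" by simp
    finally show "mat_norm1 (lprod Q (i + 1) p ** T i) \<le> \<gamma> ^ (p - i + 1)" .
    have "mat_norm1 (lprod Q i p) \<le> \<gamma> ^ (Suc p - i)"
      by (rule lprod_norm[OF Qn g0]) (use pi in auto)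
    then show "mat_norm1 (lprod Q i p) \<le> \<gamma> ^ (p - i + 1)" using pi by (simp add: Suc_diff_le)
  qed
  show ?thesis using invM part2 Tn Qn part4 by blast
qed

end
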